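(* Assume $r(\alpha)=0$ for all $\alpha\in A$, that the support $\delta(G)$ of $G$ is a convex compact subset of $\mathbb{R}^{d+1}_+$, and let $\mu$ be a pacing function with values in $[0,\omega/B_{\min}]$ such that for every $(w,B)\in\delta(G)$, $\mu(w,B)$ is the unique minimizer of $t\mapsto q^\mu(w,B,t)$ over $[0,\omega/B_{\min}]$. Then $(w,B)\mapsto\mu(w,B)$ is continuous on $\delta(G)$.
   Context: Setting. Fix integers $n\ge 2$ and $d\ge 2$, and constants $U>0$, $B_{\min}>0$. Buyer types are $(w,B)\in\Theta:=(0,U)^d\times(B_{\min},U)$; $\Theta_w:=(0,U)^d$. Item types are $\alpha\in A\subset\mathbb{R}^d_{+}$ (strictly positive orthant); all sets carry the Lebesgue $\sigma$-algebra. $F$ is a probability distribution on $A$ with a density and $G$ a probability distribution on $\Theta$ with a density. Buyer $(w,B)$ values item $\alpha$ at $w^T\alpha$; $\omega>0$ is a constant with $w^T\alpha\le\omega$ for all $w\in\Theta_w,\alpha\in A$. Reserve prices $r\equiv0$. A pacing function is a measurable map $\mu$ from buyer types (here including $\delta(G)$) to $\mathbb{R}_{\ge0}$. For $\alpha\in A$, $\lambda^\mu_\alpha$ is the distribution of $w^T\alpha/(1+\mu(w,B))$ when $(w,B)\sim G$, and $H^\mu_\alpha$ the distribution of the maximum of $n-1$ i.i.d. draws from $\lambda^\mu_\alpha$; $H^\mu_\alpha(x):=\lambda^\mu_\alpha((-\infty,x])^{n-1}$. The dual function (with $r\equiv0$) is $q^\mu(w,B,t):=(1+t)\,\mathbb{E}_{\alpha\sim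 F}\big[\int_{0}^{w^T\alpha/(1+t)}H^\mu_\alpha(s)\,ds\big]+tB$. *)

theory Defs
  imports "HOL-Probability.Probability"
begin

type_synonym 'd buyer = "(real ^ 'd) \<times> real"

definition Theta :: "real \<Rightarrow> real \<Rightarrow> 'd::finite buyer set" where
  "Theta U Bmin = {(w, B). (\<forall>i. 0 < w $ i \<and> w $ i < U) \<and> Bmin < B \<and> B < U}"

definition Theta_w :: "real \<Rightarrow> (real ^ 'd::finite) set" where
  "Theta_w U = {w. \<forall>i. 0 < w $ i \<and> w $ i < U}"

definition supp :: "'a::metric_space measure \<Rightarrow> 'a set" where
  "supp M = {x. \<forall>e>0. emeasure M (ball x e) > 0}"

definition lam :: "'d::finite buyer measure \<Rightarrow> ('d buyer \<Rightarrow> real) \<Rightarrow> real ^ 'd \<Rightarrow> real measure" where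
  "lam G mu \<alpha> = distr G borel (\<lambda>(w, B). (w \<bullet> \<alpha>) / (1 + mu (w, B)))"

definition Hdist :: "nat \<Rightarrow> 'd::finite buyer measure \<Rightarrow> ('d buyer \<Rightarrow> real) \<Rightarrow> real ^ 'd \<Rightarrow> real \<Rightarrow> real" where
  "Hdist n G mu \<alpha> x = (measure (lam G mu \<alpha>) {..x}) ^ (n - 1)"

text \<open>Dual function with zero reserve prices.\<close>
definition qdual :: "nat \<Rightarrow> (real ^ 'd) measure \<Rightarrow> 'd::finite buyer measure \<Rightarrow> ('d buyer \<Rightarrow> real)
    \<Rightarrow> 'd buyer \<Rightarrow> real \<Rightarrow> real" where
  "qdual n F G mu x t = (case x of (w, B) \<Rightarrow>
     (1 + t) * (\<integral>\<alpha>. (LBINT s:{0..(w \<bullet> \<alpha>) / (1 + t)}. Hdist n G mu \<alpha> s) \<partial>F) + t * B)"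

end

theory Submission
  imports Defs
begin


lemma I_lip:
  fixes h :: "real \<Rightarrow> real"
  assumes hm: "h \<in> borel_measurable borel" and hb: "\<And>s. \<bar>h s\<bar> \<le> 1"
  shows "\<bar>(LBINT s:{0..c}. h s) - (LBINT s:{0..c'}. h s)\<bar> \<le> \<bar>c - c'\<bar>"
proof -
  have int: "integrable lborel (\<lambda>s. indicator {0..x} s *\<^sub>R h s)" for x :: real
    by (rule integrableI_bounded_set[where A="{0..x}" and B=1]) (use hb hm in \<open>auto simp: indicator_def emeasure_lborel_Icc_eq\<close>)
  have intI: "integrable lborel (indicator {min c c'..max c c'} :: real \<Rightarrow> real)"
    by simp
  have "(LBINT s:{0..c}. h s) - (LBINT s:{0..c'}. h s)
      = (\<integral>s. indicator {0..c} s *\<^sub>R h s - indicator {0..c'} s *\<^sub>R h s \<partial>lborel)"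
    unfolding set_lebesgue_integral_def using int by (simp add: Bochner_Integration.integral_diff)
  also have "\<bar>\<dots>\<bar> \<le> (\<integral>s. indicator {min c c'..max c c'} s \<partial>lborel)"
  proof -
    have "\<bar>\<integral>s. indicator {0..c} s *\<^sub>R h s - indicator {0..c'} s *\<^sub>R h s \<partial>lborel\<bar>
        \<le> (\<integral>s. \<bar>indicator {0..c} s *\<^sub>R h s - indicator {0..c'} s *\<^sub>R h s\<bar> \<partial>lborel)"
      by (rule integral_abs_bound)
    also have "\<dots> \<le> (\<integral>s. indicator {min c c'..max c c'} s \<partial>lborel)"
    proof (rule integral_mono)
      show "integrable lborel (\<lambda>s. \<bar>indicator {0..c} s *\<^sub>R h s - indicator {0..c'} s *\<^sub>R h s\<bar>)"
        using int by (intro integrable_abs Bochner_Integration.integrable_diff) auto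
      show "integrable lborel (indicator {min c c'..max c c'} :: real \<Rightarrow> real)" by simp
      fix s :: real
      show "\<bar>indicator {0..c} s *\<^sub>R h s - indicator {0..c'} s *\<^sub>R h s\<bar> \<le> indicator {min c c'..max c c'} s"
        using hb[of s] by (auto simp: indicator_def)
    qed
    finally show ?thesis .
  qed
  also have "\<dots> = \<bar>c - c'\<bar>" by (simp add: abs_if min_def max_def)
  finally show ?thesis .
qed



lemma argmin_cont:
  fixes m :: "'a::euclidean_space \<Rightarrow> real" and q :: "'a \<Rightarrow> real \<Rightarrow> real"
  assumes S: "closed S" and T: "compact T"
    and qc: "continuous_on (S \<times> T) (\<lambda>p. q (fst p) (snd p))"
    and mT: "\<forall>x\<in>S. m x \<in> T"
    and um: "\<forall>x\<in>S. \<forall>t\<in>T. t \<noteq> m x \<longrightarrow> q x (m x) < q x t"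
  shows "continuous_on S m"
proof (rule continuous_from_closed_graph[OF T])
  show "m \<in> S \<rightarrow> T" using mT by auto
  have eq: "(\<lambda>x. (x, m x)) ` S = (S \<times> T) \<inter> (\<Inter>s\<in>T. (S \<times> T) \<inter> (\<lambda>p. q (fst p) (snd p) - q (fst p) s) -` {..0})"
  proof -
    have key: "(x, t) \<in> (\<lambda>x. (x, m x)) ` S \<longleftrightarrow> x \<in> S \<and> t \<in> T \<and> (\<forall>s\<in>T. q x t \<le> q x s)" for x t
    proof
      assume "(x, t) \<in> (\<lambda>x. (x, m x)) ` S"
      then have x: "x \<in> S" and t: "t = m x" by auto
      have "\<forall>s\<in>T. q x t \<le> q x s"
      proof
        fix s assume "s \<in> T" then show "q x t \<le> q x s"
          using um x t by (cases "s = m x") (auto simp: less_imp_le)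
      qed
      then show "x \<in> S \<and> t \<in> T \<and> (\<forall>s\<in>T. q x t \<le> q x s)" using x t mT by auto
    next
      assume h: "x \<in> S \<and> t \<in> T \<and> (\<forall>s\<in>T. q x t \<le> q x s)"
      have "t = m x"
      proof (rule ccontr)
        assume "t \<noteq> m x"
        then have "q x (m x) < q x t" using um h by auto
        moreover have "q x t \<le> q x (m x)" using h mT by auto
        ultimately show False by simp
      qed
      then show "(x, t) \<in> (\<lambda>x. (x, m x)) ` S" using h by auto
    qed
    show ?thesis
    proof (rule set_eqI)
      fix p :: "'a \<times> real"
      obtain x t where p: "p = (x, t)" by (cases p)
      show "p \<in> (\<lambda>x. (x, m x)) ` S \<longleftrightarrow> p \<in> (S \<times> T) \<inter> (\<Inter>s\<in>T. (S \<times> T) \<inter> (\<lambda>p. q (fst p) (snd p) - q (fst p) s) -` {..0})"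
        unfolding p key by auto
    qed
  qed
  have cl: "closed ((S \<times> T) \<inter> (\<lambda>p. q (fst p) (snd p) - q (fst p) s) -` {..0})" if "s \<in> T" for s
  proof (rule continuous_closed_preimage)
    have c2: "continuous_on (S \<times> T) (\<lambda>p. q (fst p) s)"
    proof -
      have "continuous_on (S \<times> T) ((\<lambda>p. q (fst p) (snd p)) \<circ> (\<lambda>p. (fst p, s)))"
        by (rule continuous_on_compose) (auto intro!: continuous_intros continuous_on_subset[OF qc] simp: that)
      then show ?thesis by (simp add: o_def)
    qed
    show "continuous_on (S \<times> T) (\<lambda>p. q (fst p) (snd p) - q (fst p) s)"
      by (intro continuous_intros qc c2)
    show "closed (S \<times> T)" using S T by (simp add: closed_Times compact_imp_closed)
  qed auto
  show "closed ((\<lambda>x. (x, m x)) ` S)"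
    unfolding eq using S T cl by (intro closed_Int closed_INT) (auto simp: closed_Times compact_imp_closed)
qed



lemma H_props:
  fixes G :: "'d::finite buyer measure" and mu :: "'d buyer \<Rightarrow> real"
  assumes sG: "sets G = sets borel" and Gp: "prob_space G" and mum: "mu \<in> borel_measurable borel"
  shows "(\<lambda>p. Hdist n G mu (fst p) (snd p)) \<in> borel_measurable borel"
    and "0 \<le> Hdist n G mu \<alpha> s" "Hdist n G mu \<alpha> s \<le> 1"
proof -
  have spG: "space G = UNIV" using sets_eq_imp_space_eq[OF sG] by simp
  have mum': "mu \<in> borel_measurable G" by (subst measurable_cong_sets[OF sG refl]) (rule mum)
  have sG': "sets G = sets (borel \<Otimes>\<^sub>M (borel :: real measure))"
    unfolding borel_prod by (rule sG)
  have mum2[measurable]: "mu \<in> borel_measurable (borel \<Otimes>\<^sub>M (borel :: real measure))"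
    unfolding borel_prod by (rule mum)
  have fm: "(\<lambda>x. fst x \<bullet> a / (1 + mu x)) \<in> borel_measurable G" for a :: "real ^ 'd"
    by (subst measurable_cong_sets[OF sG' refl]) measurable
  have eqH: "Hdist n G mu a s = (measure G {x. fst x \<bullet> a / (1 + mu x) \<le> s}) ^ (n - 1)" for a s
  proof -
    have "(\<lambda>(w, B). w \<bullet> a / (1 + mu (w, B))) = (\<lambda>x. fst x \<bullet> a / (1 + mu x))"
      by (auto simp: fun_eq_iff split: prod.splits)
    then show ?thesis
      unfolding Hdist_def lam_def using fm[of a] spG
      by (simp add: measure_distr vimage_def)
  qed
  interpret G: prob_space G by (rule Gp)
  show "0 \<le> Hdist n G mu \<alpha> s" unfolding eqH by simp
  show "Hdist n G mu \<alpha> s \<le> 1" unfolding eqH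
    by (rule power_le_one) (auto simp: G.prob_le_1)
  let ?Q = "{z :: ((real ^ 'd) \<times> real) \<times> 'd buyer. fst (snd z) \<bullet> fst (fst z) / (1 + mu (snd z)) \<le> snd (fst z)}"
  have Q0: "{z \<in> space ((borel \<Otimes>\<^sub>M borel) \<Otimes>\<^sub>M (borel \<Otimes>\<^sub>M (borel :: real measure))). fst (snd z) \<bullet> fst (fst z) / (1 + mu (snd z)) \<le> snd (fst z)}
     \<in> sets ((borel \<Otimes>\<^sub>M borel) \<Otimes>\<^sub>M (borel \<Otimes>\<^sub>M (borel :: real measure)))"
    by measurable
  have sP: "sets ((borel :: ((real ^ 'd) \<times> real) measure) \<Otimes>\<^sub>M G) = sets ((borel \<Otimes>\<^sub>M borel) \<Otimes>\<^sub>M (borel \<Otimes>\<^sub>M (borel :: real measure)))"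
    by (rule sets_pair_measure_cong[OF _ sG']) (simp only: borel_prod)
  have Q: "?Q \<in> sets (borel \<Otimes>\<^sub>M G)"
    using Q0 unfolding sP by (simp add: space_pair_measure)
  have "(\<lambda>p. emeasure G (Pair p -` ?Q)) \<in> borel_measurable borel"
    by (rule G.measurable_emeasure_Pair[OF Q])
  then have "(\<lambda>p. enn2real (emeasure G (Pair p -` ?Q))) \<in> borel_measurable borel"
    by measurable
  moreover have "Pair p -` ?Q = {x. fst x \<bullet> fst p / (1 + mu x) \<le> snd p}" for p
    by auto
  ultimately have "(\<lambda>p. measure G {x. fst x \<bullet> fst p / (1 + mu x) \<le> snd p}) \<in> borel_measurable borel"
    by (simp add: measure_def)
  then show "(\<lambda>p. Hdist n G mu (fst p) (snd p)) \<in> borel_measurable borel"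
    unfolding eqH by measurable
qed



lemma c_lip:
  fixes w w' a :: "real ^ 'd::finite" and t t' :: real
  assumes t: "t \<ge> 0" "t' \<ge> 0" and a: "norm a \<le> C" and w': "norm w' \<le> W"
  shows "\<bar>w \<bullet> a / (1 + t) - w' \<bullet> a / (1 + t')\<bar> \<le> C * norm (w - w') + W * C * \<bar>t - t'\<bar>"
proof -
  have C0: "0 \<le> C" using a norm_ge_zero order_trans by blast
  have eq: "w \<bullet> a / (1 + t) - w' \<bullet> a / (1 + t') = (w - w') \<bullet> a / (1 + t) + (w' \<bullet> a) * ((t' - t) / ((1 + t) * (1 + t')))"
  proof -
    have g: "X / (1 + t) - Y / (1 + t') = (X - Y) / (1 + t) + Y * ((t' - t) / ((1 + t) * (1 + t')))" for X Y :: real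
    proof -
      have "1 + t \<noteq> 0" "1 + t' \<noteq> 0" using t by auto
      then show ?thesis by (simp add: divide_simps) (simp add: algebra_simps)
    qed
    show ?thesis using g[of "w \<bullet> a" "w' \<bullet> a"] by (simp add: inner_diff_left)
  qed
  have 1: "\<bar>(w - w') \<bullet> a / (1 + t)\<bar> \<le> C * norm (w - w')"
  proof -
    have "\<bar>(w - w') \<bullet> a\<bar> \<le> norm (w - w') * norm a" by (rule Cauchy_Schwarz_ineq2)
    also have "\<dots> \<le> norm (w - w') * C" using a by (simp add: mult_left_mono)
    finally have h: "\<bar>(w - w') \<bullet> a\<bar> \<le> C * norm (w - w')" by (simp add: mult.commute)
    have "\<bar>(w - w') \<bullet> a / (1 + t)\<bar> = \<bar>(w - w') \<bullet> a\<bar> / (1 + t)" using t by simp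
    also have "\<dots> \<le> \<bar>(w - w') \<bullet> a\<bar>" using t by (simp add: divide_le_eq mult_le_cancel_left1)
    finally show ?thesis using h by linarith
  qed
  have 2: "\<bar>(w' \<bullet> a) * ((t' - t) / ((1 + t) * (1 + t')))\<bar> \<le> W * C * \<bar>t - t'\<bar>"
  proof -
    have "\<bar>w' \<bullet> a\<bar> \<le> norm w' * norm a" by (rule Cauchy_Schwarz_ineq2)
    also have "\<dots> \<le> W * C" using a w' by (intro mult_mono) (auto intro: order_trans[OF norm_ge_zero])
    finally have h1: "\<bar>w' \<bullet> a\<bar> \<le> W * C" .
    have "\<bar>(t' - t) / ((1 + t) * (1 + t'))\<bar> = \<bar>t - t'\<bar> / ((1 + t) * (1 + t'))" using t by simp
    also have "\<dots> \<le> \<bar>t - t'\<bar>" proof -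
      have "1 \<le> (1 + t) * (1 + t')" using t by (simp add: algebra_simps)
      then show ?thesis using t by (simp add: divide_le_eq mult_le_cancel_left1)
    qed
    finally have h2: "\<bar>(t' - t) / ((1 + t) * (1 + t'))\<bar> \<le> \<bar>t - t'\<bar>" .
    show ?thesis unfolding abs_mult by (rule mult_mono[OF h1 h2]) (use h1 in auto)
  qed
  show ?thesis unfolding eq using 1 2 by linarith
qed

lemma I_zero: "(LBINT s:{0..0::real}. h s) = (0::real)"
  unfolding set_lebesgue_integral_def
  by (rule integral_eq_zero_AE, rule eventually_mono[OF AE_lborel_singleton[of 0]]) (auto simp: indicator_def)



lemma Phi_cont:
  fixes F :: "(real ^ 'd::finite) measure" and G :: "'d buyer measure" and mu :: "'d buyer \<Rightarrow> real"
    and S :: "'d buyer set" and T :: "real set"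
  assumes sF: "sets F = sets borel" and Fp: "prob_space F"
    and sG: "sets G = sets borel" and Gp: "prob_space G" and mum: "mu \<in> borel_measurable borel"
    and Cb: "AE a in F. norm a \<le> C" and Wb: "\<forall>x\<in>S. norm (fst x) \<le> W" and T0: "\<forall>t\<in>T. 0 \<le> t"
    and C0: "0 \<le> C" and W0: "0 \<le> W"
  shows "continuous_on (S \<times> T) (\<lambda>p. \<integral>a. (LBINT s:{0..(fst (fst p) \<bullet> a) / (1 + snd p)}. Hdist n G mu a s) \<partial>F)"
proof -
  interpret F: prob_space F by (rule Fp)
  have Hm: "(\<lambda>p. Hdist n G mu (fst p) (snd p)) \<in> borel_measurable borel"
    and Hb0: "\<And>a s. 0 \<le> Hdist n G mu a s" and Hb1: "\<And>a s. Hdist n G mu a s \<le> 1"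
    using H_props[OF sG Gp mum] by auto
  have Hm2[measurable]: "(\<lambda>p. Hdist n G mu (fst p) (snd p)) \<in> borel_measurable (borel \<Otimes>\<^sub>M (borel :: real measure))"
    unfolding borel_prod by (rule Hm)
  have Hs: "(\<lambda>s. Hdist n G mu a s) \<in> borel_measurable borel" for a
  proof -
    have "(\<lambda>s::real. (a, s)) \<in> borel \<rightarrow>\<^sub>M borel \<Otimes>\<^sub>M borel" by measurable
    from measurable_compose[OF this Hm2] show ?thesis by simp
  qed
  have Hab: "\<bar>Hdist n G mu a s\<bar> \<le> 1" for a s using Hb0[of a s] Hb1[of a s] by simp
  define g where "g p a = (LBINT s:{0..(fst (fst p) \<bullet> a) / (1 + snd p)}. Hdist n G mu a s)"
    for p :: "'d buyer \<times> real" and a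
  have gm: "g p \<in> borel_measurable F" for p
  proof -
    have eqi: "indicator {0..(fst (fst p) \<bullet> a) / (1 + snd p)} s = (if 0 \<le> s \<and> s \<le> (fst (fst p) \<bullet> a) / (1 + snd p) then 1 else (0::real))" for a s
      by (simp add: indicator_def)
    have "(\<lambda>(a, s). indicator {0..(fst (fst p) \<bullet> a) / (1 + snd p)} s *\<^sub>R Hdist n G mu a s)
          \<in> borel_measurable (borel \<Otimes>\<^sub>M (borel :: real measure))"
      unfolding eqi by measurable
    then have "(\<lambda>(a, s). indicator {0..(fst (fst p) \<bullet> a) / (1 + snd p)} s *\<^sub>R Hdist n G mu a s)
          \<in> borel_measurable (borel \<Otimes>\<^sub>M lborel)"
      by (subst measurable_cong_sets[OF sets_pair_measure_cong[OF refl sets_lborel] refl])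
    then have "(\<lambda>a. \<integral>s. indicator {0..(fst (fst p) \<bullet> a) / (1 + snd p)} s *\<^sub>R Hdist n G mu a s \<partial>lborel) \<in> borel_measurable borel"
      by (rule lborel.borel_measurable_lebesgue_integral)
    then show ?thesis unfolding g_def set_lebesgue_integral_def
      by (subst measurable_cong_sets[OF sF refl])
  qed
  have gb: "\<bar>g p a\<bar> \<le> \<bar>(fst (fst p) \<bullet> a) / (1 + snd p)\<bar>" for p a
    using I_lip[OF Hs[of a] Hab[of a], of "(fst (fst p) \<bullet> a) / (1 + snd p)" 0] I_zero[of "Hdist n G mu a"] by (simp add: g_def)
  have gi: "integrable F (g p)" if p: "p \<in> S \<times> T" for p
  proof (rule F.integrable_const_bound[OF _ gm])
    show "AE a in F. norm (g p a) \<le> W * C"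
      using Cb
    proof (rule eventually_mono)
      fix a :: "real ^ 'd" assume a: "norm a \<le> C"
      have "\<bar>(fst (fst p) \<bullet> a) / (1 + snd p)\<bar> \<le> C * norm (fst (fst p) - 0) + 0 * C * \<bar>snd p - 0\<bar>"
        using c_lip[of "snd p" 0 a C 0 0 "fst (fst p)"] a p T0 by auto
      also have "\<dots> \<le> W * C" using Wb p C0 by (auto simp: mult.commute mult_left_mono)
      finally show "norm (g p a) \<le> W * C" using gb[of p a] by simp
    qed
  qed
  have gd: "\<bar>g p a - g p' a\<bar> \<le> \<bar>(fst (fst p) \<bullet> a) / (1 + snd p) - (fst (fst p') \<bullet> a) / (1 + snd p')\<bar>" for p p' a
    using I_lip[OF Hs[of a] Hab[of a], of "(fst (fst p) \<bullet> a) / (1 + snd p)" "(fst (fst p') \<bullet> a) / (1 + snd p')"]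
    by (simp add: g_def)
  have lip: "(C * (1 + W))-lipschitz_on (S \<times> T) (\<lambda>p. integral\<^sup>L F (g p))"
  proof (rule lipschitz_onI)
    show "0 \<le> C * (1 + W)" using C0 W0 by simp
    fix p p' assume p: "p \<in> S \<times> T" and p': "p' \<in> S \<times> T"
    have d1: "norm (fst (fst p) - fst (fst p')) \<le> dist p p'"
      using dist_fst_le[of "fst p" "fst p'"] dist_fst_le[of p p'] by (simp add: dist_norm)
    have d2: "\<bar>snd p - snd p'\<bar> \<le> dist p p'"
      using dist_snd_le[of p p'] by (simp add: dist_real_def)
    have "dist (integral\<^sup>L F (g p)) (integral\<^sup>L F (g p')) = \<bar>\<integral>a. g p a - g p' a \<partial>F\<bar>"
      using gi[OF p] gi[OF p'] by (simp add: dist_real_def Bochner_Integration.integral_diff)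
    also have "\<dots> \<le> (\<integral>a. \<bar>g p a - g p' a\<bar> \<partial>F)" by (rule integral_abs_bound)
    also have "\<dots> \<le> (\<integral>a. C * (1 + W) * dist p p' \<partial>F)"
    proof (rule integral_mono_AE)
      show "integrable F (\<lambda>a. \<bar>g p a - g p' a\<bar>)"
        using gi[OF p] gi[OF p'] by auto
      show "integrable F (\<lambda>a. C * (1 + W) * dist p p')" by simp
      show "AE a in F. \<bar>g p a - g p' a\<bar> \<le> C * (1 + W) * dist p p'"
        using Cb
      proof (rule eventually_mono)
        fix a :: "real ^ 'd" assume a: "norm a \<le> C"
        have "\<bar>g p a - g p' a\<bar> \<le> C * norm (fst (fst p) - fst (fst p')) + W * C * \<bar>snd p - snd p'\<bar>"
          using gd[of p a p'] c_lip[of "snd p" "snd p'" a C "fst (fst p')" W "fst (fst p)"] a p p' T0 Wb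
          by fastforce
        also have "\<dots> \<le> C * dist p p' + W * C * dist p p'"
          using d1 d2 C0 W0 by (intro add_mono mult_left_mono) auto
        finally show "\<bar>g p a - g p' a\<bar> \<le> C * (1 + W) * dist p p'" by (simp add: algebra_simps)
      qed
    qed
    also have "\<dots> = C * (1 + W) * dist p p'" by (simp add: F.prob_space)
    finally show "dist (integral\<^sup>L F (g p)) (integral\<^sup>L F (g p')) \<le> C * (1 + W) * dist p p'" .
  qed
  show ?thesis using lipschitz_on_continuous_on[OF lip] unfolding g_def[abs_def] by simp
qed



theorem mainTheorem15:
  fixes n :: nat and U Bmin \<omega> :: real
    and A :: "(real ^ 'd::finite) set"
    and F :: "(real ^ 'd) measure" and G :: "'d buyer measure"
    and mu :: "'d buyer \<Rightarrow> real"
  assumes n: "n \<ge> 2" and d: "CARD('d) \<ge> 2"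
    and U: "U > 0" and Bmin: "Bmin > 0"
    and A_pos: "\<forall>\<alpha>\<in>A. \<forall>i. \<alpha> $ i > 0"
    and F_prob: "prob_space F" and F_dens: "\<exists>f. f \<in> borel_measurable lborel \<and> F = density lborel f"
    and F_on_A: "AE \<alpha> in F. \<alpha> \<in> A"
    and G_prob: "prob_space G" and G_dens: "\<exists>g. g \<in> borel_measurable lborel \<and> G = density lborel g"
    and G_on_Theta: "AE x in G. x \<in> Theta U Bmin"
    and omega: "\<omega> > 0" "\<forall>w\<in>Theta_w U. \<forall>\<alpha>\<in>A. w \<bullet> \<alpha> \<le> \<omega>"
    and supp_convex: "convex (supp G)" and supp_compact: "compact (supp G)"
    and supp_nonneg: "\<forall>(w, B)\<in>supp G. (\<forall>i. w $ i \<ge> 0) \<and> B \<ge> 0"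
    and mu_meas: "mu \<in> borel_measurable borel"
    and mu_range: "\<forall>x\<in>Theta U Bmin \<union> supp G. mu x \<in> {0..\<omega> / Bmin}"
    and mu_unique_min: "\<forall>x\<in>supp G. \<forall>t\<in>{0..\<omega> / Bmin}. t \<noteq> mu x \<longrightarrow>
                          qdual n F G mu x (mu x) < qdual n F G mu x t"
  shows "continuous_on (supp G) mu"
proof -
  have sG: "sets G = sets borel" using G_dens by auto
  have sF: "sets F = sets borel" using F_dens by auto
  define C where "C = 2 * \<omega> / U"
  have C0: "0 \<le> C" using omega U by (simp add: C_def)
  have Cb: "AE a in F. norm a \<le> C"
    using F_on_A
  proof (rule eventually_mono)
    fix a assume aA: "a \<in> A"
    define w0 :: "real ^ 'd" where "w0 = (\<chi> i. U / 2)"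
    have "w0 \<in> Theta_w U" using U by (simp add: Theta_w_def w0_def)
    then have "w0 \<bullet> a \<le> \<omega>" using omega aA by auto
    then have "(U / 2) * (\<Sum>i\<in>UNIV. a $ i) \<le> \<omega>"
      by (simp add: inner_vec_def w0_def sum_distrib_left)
    then have s: "(\<Sum>i\<in>UNIV. a $ i) \<le> C" using U by (simp add: C_def field_simps)
    have "norm a \<le> (\<Sum>i\<in>UNIV. \<bar>a $ i\<bar>)" by (rule norm_le_l1_cart)
    also have "\<dots> = (\<Sum>i\<in>UNIV. a $ i)" using A_pos aA by (intro sum.cong) (auto simp: less_imp_le)
    finally show "norm a \<le> C" using s by simp
  qed
  obtain W0 where W0: "\<forall>x\<in>supp G. norm x \<le> W0"
    using compact_imp_bounded[OF supp_compact] by (auto simp: bounded_iff)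
  define W where "W = max W0 0"
  have W0': "0 \<le> W" by (simp add: W_def)
  have Wb: "\<forall>x\<in>supp G. norm (fst x) \<le> W"
  proof
    fix x assume "x \<in> supp G"
    then have "norm x \<le> W0" using W0 by auto
    moreover have "norm (fst x) \<le> norm x" using dist_fst_le[of x 0] by (simp add: dist_norm)
    ultimately show "norm (fst x) \<le> W" by (simp add: W_def)
  qed
  let ?T = "{0..\<omega> / Bmin}"
  have Phi: "continuous_on (supp G \<times> ?T) (\<lambda>p. \<integral>a. (LBINT s:{0..(fst (fst p) \<bullet> a) / (1 + snd p)}. Hdist n G mu a s) \<partial>F)"
    by (rule Phi_cont[OF sF F_prob sG G_prob mu_meas Cb Wb _ C0 W0']) auto
  have qeq: "qdual n F G mu (fst p) (snd p) = (1 + snd p) * (\<integral>a. (LBINT s:{0..(fst (fst p) \<bullet> a) / (1 + snd p)}. Hdist n G mu a s) \<partial>F) + snd p * snd (fst p)" for p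
    by (simp add: qdual_def split: prod.splits)
  have qc: "continuous_on (supp G \<times> ?T) (\<lambda>p. qdual n F G mu (fst p) (snd p))"
    unfolding qeq by (intro continuous_intros Phi)
  show ?thesis
  proof (rule argmin_cont[OF _ _ qc])
    show "closed (supp G)" using supp_compact by (rule compact_imp_closed)
    show "compact ?T" by simp
    show "\<forall>x\<in>supp G. mu x \<in> ?T" using mu_range by auto
    show "\<forall>x\<in>supp G. \<forall>t\<in>?T. t \<noteq> mu x \<longrightarrow> qdual n F G mu x (mu x) < qdual n F G mu x t"
      by (rule mu_unique_min)
  qed
qed

end
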